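(* In the setting of the context, at every stage $k\in\{0,\dots,K\}$ (and for every fixed sequence of observed values $f_1,\dots,f_k$) there exists a set $\{\alpha_k^i\}$ of row vectors $\alpha_k^i\in\mathbb{R}^{1\times L}$ such that $\bar{J}_k(\varpi)=\min_i[\alpha_k^i\varpi]$ for all $\varpi$ in the probability simplex, with $\{\alpha_K^i\}\triangleq\{Q_j^T\}_{j=1}^L$.
   Context: There are $L$ classes $c_1,\dots,c_L$ with class variable $\mathcal{C}$, and features $F_1,\dots,F_K$ with finitely many values, jointly distributed with $\mathcal{C}$. Let $e_k>0$ be feature evaluation costs, $Q_{ij}\geqslant 0$ misclassification costs, $Q_j=[Q_{1j},\dots,Q_{Lj}]^T$, and on the simplex $\Sigma=\{\varpi\in[0,1]^L:\sum_i\omega_i=1\}$ let $g(\varpi)=\min_{1\leqslant j\leqslant L}Q_j^T\varpi$. Let $\Delta(f_{k+1}\mid f_1,\dots,f_k)=[P(F_{k+1}=f_{k+1}\mid F_1=f_1,\dots,F_k=f_k,\mathcal{C}=c_i)]_{i=1}^L$. Define recursively $\bar{J}_K(\varpi)=g(\varpi)$ and, for $k=K-1,\dots,0$, $\bar{J}_k(\varpi)=\min[g(\varpi),\mathcal{A}_k(\varpi)]$, where $$\mathcal{A}_k(\varpi)=e_{k+1}+\sum_{f_{k+1}}\Delta^T(f_{k+1}\mid f_1,\dots,f_k)\varpi\;\bar{J}_{k+1}\!\left(\frac{\operatorname{diag}(\Delta(f_{k+1}\mid f_1,\dots,f_k))\varpi}{\Delta^T(f_{k+1}\mid f_1,\dots,f_k)\varpi}\right),$$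 the sum being over the possible values of $F_{k+1}$, $\bar{J}_{k+1}$ being the corresponding function for the history $f_1,\dots,f_{k+1}$, and a summand whose factor $\Delta^T\varpi$ equals $0$ taken to be $0$. *)

theory Defs
  imports "HOL-Probability.Probability"
begin

text \<open>Classes form a finite type 'c; feature values form a finite type 'v.
  The joint distribution of (class, feature vector [F_1,...,F_K]) is a pmf P
  on 'c \<times> 'v list.\<close>

definition prob_simplex :: "('c::finite \<Rightarrow> real) set" where
  "prob_simplex = {w. (\<forall>i. 0 \<le> w i) \<and> (\<Sum>i\<in>UNIV. w i) = 1}"

definition gfun :: "('c::finite \<Rightarrow> 'c \<Rightarrow> real) \<Rightarrow> ('c \<Rightarrow> real) \<Rightarrow> real" where
  "gfun Q w = Min ((\<lambda>j. \<Sum>i\<in>UNIV. Q i j * w i) ` UNIV)"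

text \<open>Delta P hist f c = P(F_{k+1} = f | F_1..F_k = hist, C = c), k = length hist
  (0 if the conditioning event is null).\<close>
definition Delta :: "('c \<times> 'v list) pmf \<Rightarrow> 'v list \<Rightarrow> 'v \<Rightarrow> 'c \<Rightarrow> real" where
  "Delta P hist f c =
     measure_pmf.prob P {(c', fs). c' = c \<and> take (Suc (length hist)) fs = hist @ [f]}
     / measure_pmf.prob P {(c', fs). c' = c \<and> take (length hist) fs = hist}"

text \<open>Jrem P Q e n hist = Jbar_k for the history hist of length k, where n = K - k
  is the number of remaining stages; e (k+1) is the cost of feature F_{k+1}.\<close>
fun Jrem :: "('c::finite \<times> 'v::finite list) pmf \<Rightarrow> ('c \<Rightarrow> 'c \<Rightarrow> real) \<Rightarrow> (nat \<Rightarrow> real)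
    \<Rightarrow> nat \<Rightarrow> 'v list \<Rightarrow> ('c \<Rightarrow> real) \<Rightarrow> real" where
  "Jrem P Q e 0 hist w = gfun Q w"
| "Jrem P Q e (Suc n) hist w =
     min (gfun Q w)
       (e (Suc (length hist)) +
        (\<Sum>f\<in>UNIV.
           let d = (\<Sum>i\<in>UNIV. Delta P hist f i * w i) in
           if d = 0 then 0
           else d * Jrem P Q e n (hist @ [f]) (\<lambda>i. Delta P hist f i * w i / d)))"

definition Jbar :: "('c::finite \<times> 'v::finite list) pmf \<Rightarrow> ('c \<Rightarrow> 'c \<Rightarrow> real) \<Rightarrow> (nat \<Rightarrow> real)
    \<Rightarrow> nat \<Rightarrow> 'v list \<Rightarrow> ('c \<Rightarrow> real) \<Rightarrow> real" where
  "Jbar P Q e K hist = Jrem P Q e (K - length hist) hist"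

end

theory Submission
  imports Defs
begin

definition lin :: "('c::finite \<Rightarrow> real) \<Rightarrow> ('c \<Rightarrow> real) \<Rightarrow> real" where
  "lin a w = (\<Sum>i\<in>UNIV. a i * w i)"

lemma l1: fixes a D :: "'v::finite \<Rightarrow> 'c::finite \<Rightarrow> real"
  shows "(\<Sum>i\<in>UNIV. (E + (\<Sum>f\<in>UNIV. a f i * D f i)) * w i)
            = E * (\<Sum>i\<in>UNIV. w i) + (\<Sum>i\<in>UNIV. \<Sum>f\<in>UNIV. a f i * D f i * w i)"
  by (simp add: distrib_right sum.distrib sum_distrib_right sum_distrib_left)
lemma l2: fixes a D :: "'v::finite \<Rightarrow> 'c::finite \<Rightarrow> real"
  assumes ws: "(\<Sum>i\<in>UNIV. w i) = 1"
  shows "E * (\<Sum>i\<in>UNIV. w i) + (\<Sum>i\<in>UNIV. \<Sum>f\<in>UNIV. a f i * D f i * w i)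
     = E + (\<Sum>f\<in>UNIV. \<Sum>i\<in>UNIV. a f i * D f i * w i)"
  unfolding ws using sum.swap[of "\<lambda>i f. a f i * D f i * w i" UNIV UNIV] by simp

lemma Delta_nonneg: "Delta P hist f c \<ge> 0"
  by (simp add: Delta_def)

lemma scale_Min:
  fixes d :: real
  assumes "d \<ge> 0" "finite A" "A \<noteq> {}"
  shows "d * Min (g ` A) = Min ((\<lambda>a. d * g a) ` A)"
proof -
  have m: "mono ((*) d)" using assms(1) by (simp add: mono_def mult_left_mono)
  have "d * Min (g ` A) = Min ((*) d ` g ` A)"
    using mono_Min_commute[OF m, of "g ` A"] assms by simp
  then show ?thesis by (simp add: image_image)
qed

lemma add_Min:
  fixes c :: real
  assumes "finite A" "A \<noteq> {}"
  shows "c + Min (g ` A) = Min ((\<lambda>a. c + g a) ` A)"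
proof -
  have m: "mono ((+) c)" by (simp add: mono_def)
  have "c + Min (g ` A) = Min ((+) c ` g ` A)"
    using mono_Min_commute[OF m, of "g ` A"] assms by simp
  then show ?thesis by (simp add: image_image)
qed

lemma sum_Min:
  fixes F :: "'v::finite \<Rightarrow> 'a \<Rightarrow> real"
  assumes fin: "\<And>f. finite (Af f)" and ne: "\<And>f. Af f \<noteq> {}"
  shows "(\<Sum>f\<in>UNIV. Min (F f ` Af f)) = Min ((\<lambda>\<alpha>. \<Sum>f\<in>UNIV. F f (\<alpha> f)) ` PiE UNIV Af)"
proof -
  have finP: "finite (PiE UNIV Af)" using fin by (simp add: finite_PiE)
  have ex: "\<forall>f. \<exists>a. a \<in> Af f \<and> F f a = Min (F f ` Af f)"
  proof
    fix f
    have "Min (F f ` Af f) \<in> F f ` Af f" using fin ne by (intro Min_in) auto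
    then show "\<exists>a. a \<in> Af f \<and> F f a = Min (F f ` Af f)" by force
  qed
  then obtain a0 where a0: "\<And>f. a0 f \<in> Af f \<and> F f (a0 f) = Min (F f ` Af f)"
    by metis
  have a0P: "a0 \<in> PiE UNIV Af" using a0 by (auto simp: PiE_def extensional_def)
  show ?thesis
  proof (rule Min_eqI[symmetric])
    show "finite ((\<lambda>\<alpha>. \<Sum>f\<in>UNIV. F f (\<alpha> f)) ` PiE UNIV Af)" using finP by simp
  next
    fix y assume "y \<in> (\<lambda>\<alpha>. \<Sum>f\<in>UNIV. F f (\<alpha> f)) ` PiE UNIV Af"
    then obtain \<alpha> where al: "\<alpha> \<in> PiE UNIV Af" and y: "y = (\<Sum>f\<in>UNIV. F f (\<alpha> f))" by auto
    have "\<And>f. Min (F f ` Af f) \<le> F f (\<alpha> f)"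
      using al fin by (intro Min_le) (auto simp: PiE_def)
    then show "(\<Sum>f\<in>UNIV. Min (F f ` Af f)) \<le> y" unfolding y by (intro sum_mono) auto
  next
    show "(\<Sum>f\<in>UNIV. Min (F f ` Af f)) \<in> (\<lambda>\<alpha>. \<Sum>f\<in>UNIV. F f (\<alpha> f)) ` PiE UNIV Af"
      using a0P a0 by (intro image_eqI[of _ _ a0]) auto
  qed
qed

lemma term_eq:
  fixes P :: "('c::finite \<times> 'v::finite list) pmf"
  assumes w: "w \<in> prob_simplex" and fin: "finite A" and ne: "A \<noteq> {}"
    and J: "\<forall>w\<in>prob_simplex. Jrem P Q e n (hist @ [f]) w = Min ((\<lambda>\<alpha>. lin \<alpha> w) ` A)"
  shows "(let d = (\<Sum>i\<in>UNIV. Delta P hist f i * w i) in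
           if d = 0 then 0
           else d * Jrem P Q e n (hist @ [f]) (\<lambda>i. Delta P hist f i * w i / d))
         = Min ((\<lambda>\<alpha>. lin (\<lambda>i. \<alpha> i * Delta P hist f i) w) ` A)"
proof -
  define d where "d = (\<Sum>i\<in>UNIV. Delta P hist f i * w i)"
  have wn: "\<And>i. w i \<ge> 0" and ws: "(\<Sum>i\<in>UNIV. w i) = 1" using w by (auto simp: prob_simplex_def)
  have tn: "\<And>i. Delta P hist f i * w i \<ge> 0" by (intro mult_nonneg_nonneg Delta_nonneg wn)
  have d0: "d \<ge> 0" unfolding d_def using tn by (simp add: sum_nonneg)
  show ?thesis
  proof (cases "d = 0")
    case True
    then have z: "\<And>i. Delta P hist f i * w i = 0" unfolding d_def using tn
      by (simp add: sum_nonneg_eq_0_iff)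
    have "\<And>\<alpha>. lin (\<lambda>i. \<alpha> i * Delta P hist f i) w = 0"
      unfolding lin_def by (simp add: mult.assoc z del: mult_eq_0_iff)
    then have "(\<lambda>\<alpha>. lin (\<lambda>i. \<alpha> i * Delta P hist f i) w) ` A = {0}" using ne by auto
    then show ?thesis using True by (simp add: d_def[symmetric] Let_def)
  next
    case False
    then have dp: "d > 0" using d0 by simp
    define w' where "w' = (\<lambda>i. Delta P hist f i * w i / d)"
    have "w' \<in> prob_simplex"
      unfolding prob_simplex_def w'_def using tn dp
      by (auto simp: sum_divide_distrib[symmetric] d_def[symmetric])
    then have "Jrem P Q e n (hist @ [f]) w' = Min ((\<lambda>\<alpha>. lin \<alpha> w') ` A)" using J by blast
    then have "d * Jrem P Q e n (hist @ [f]) w' = Min ((\<lambda>\<alpha>. d * lin \<alpha> w') ` A)"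
      using scale_Min[OF d0 fin ne] by simp
    also have "(\<lambda>\<alpha>. d * lin \<alpha> w') = (\<lambda>\<alpha>. lin (\<lambda>i. \<alpha> i * Delta P hist f i) w)"
      unfolding lin_def w'_def using dp
      by (auto simp: sum_distrib_left intro!: ext sum.cong)
    finally show ?thesis using False by (simp add: d_def[symmetric] Let_def w'_def)
  qed
qed

lemma main:
  fixes P :: "('c::finite \<times> 'v::finite list) pmf"
  shows "\<forall>hist. \<exists>A :: ('c \<Rightarrow> real) set. finite A \<and> A \<noteq> {} \<and>
              (n = 0 \<longrightarrow> A = (\<lambda>j i. Q i j) ` UNIV) \<and>
              (\<forall>w\<in>prob_simplex. Jrem P Q e n hist w = Min ((\<lambda>\<alpha>. lin \<alpha> w) ` A))"
proof (induction n)
  case 0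
  show ?case
  proof
    fix hist
    show "\<exists>A :: ('c \<Rightarrow> real) set. finite A \<and> A \<noteq> {} \<and>
              (0 = (0::nat) \<longrightarrow> A = (\<lambda>j i. Q i j) ` UNIV) \<and>
              (\<forall>w\<in>prob_simplex. Jrem P Q e 0 hist w = Min ((\<lambda>\<alpha>. lin \<alpha> w) ` A))"
      by (rule exI[of _ "(\<lambda>j i. Q i j) ` UNIV"])
         (simp add: gfun_def lin_def image_image)
  qed
next
  case (Suc n)
  show ?case
  proof
    fix hist
    from Suc have "\<forall>f. \<exists>A :: ('c \<Rightarrow> real) set. finite A \<and> A \<noteq> {} \<and>
              (\<forall>w\<in>prob_simplex. Jrem P Q e n (hist @ [f]) w = Min ((\<lambda>\<alpha>. lin \<alpha> w) ` A))"
      by blast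
    from choice[OF this] obtain Af where Af0: "\<forall>f. finite (Af f) \<and> Af f \<noteq> {} \<and>
              (\<forall>w\<in>prob_simplex. Jrem P Q e n (hist @ [f]) w = Min ((\<lambda>\<alpha>. lin \<alpha> w) ` Af f))"
      by (elim exE)
    have Af: "\<And>f. finite (Af f) \<and> Af f \<noteq> {} \<and>
              (\<forall>w\<in>prob_simplex. Jrem P Q e n (hist @ [f]) w = Min ((\<lambda>\<alpha>. lin \<alpha> w) ` Af f))"
      using Af0 by (rule spec)
    define E where "E = e (Suc (length hist))"
    define B where "B = (\<lambda>\<alpha>. \<lambda>i. E + (\<Sum>f\<in>UNIV. \<alpha> f i * Delta P hist f i)) ` PiE UNIV Af"
    define QS where "QS = (\<lambda>j i. Q i j) ` (UNIV :: 'c set)"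
    have finB: "finite B" unfolding B_def using Af by (simp add: finite_PiE)
    have neB: "B \<noteq> {}" unfolding B_def using Af by (simp add: PiE_eq_empty_iff)
    have finQ: "finite QS" "QS \<noteq> {}" unfolding QS_def by auto
    show "\<exists>A :: ('c \<Rightarrow> real) set. finite A \<and> A \<noteq> {} \<and>
              (Suc n = 0 \<longrightarrow> A = (\<lambda>j i. Q i j) ` UNIV) \<and>
              (\<forall>w\<in>prob_simplex. Jrem P Q e (Suc n) hist w = Min ((\<lambda>\<alpha>. lin \<alpha> w) ` A))"
    proof (rule exI[of _ "QS \<union> B"], intro conjI ballI)
      show "finite (QS \<union> B)" using finB finQ by simp
      show "QS \<union> B \<noteq> {}" using finQ by simp
      show "Suc n = 0 \<longrightarrow> QS \<union> B = (\<lambda>j i. Q i j) ` UNIV" by simp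
      fix w :: "'c \<Rightarrow> real"
      assume w: "w \<in> prob_simplex"
      have ws: "(\<Sum>i\<in>UNIV. w i) = 1" using w by (auto simp: prob_simplex_def)
      have g: "gfun Q w = Min ((\<lambda>\<alpha>. lin \<alpha> w) ` QS)"
        by (simp add: gfun_def lin_def QS_def image_image)
      have t: "\<And>f. (let d = (\<Sum>i\<in>UNIV. Delta P hist f i * w i) in
           if d = 0 then 0
           else d * Jrem P Q e n (hist @ [f]) (\<lambda>i. Delta P hist f i * w i / d))
         = Min ((\<lambda>\<alpha>. lin (\<lambda>i. \<alpha> i * Delta P hist f i) w) ` Af f)"
        by (rule term_eq[OF w]) (use Af in auto)
      have s: "(\<Sum>f\<in>UNIV. Min ((\<lambda>\<alpha>. lin (\<lambda>i. \<alpha> i * Delta P hist f i) w) ` Af f))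
          = Min ((\<lambda>\<alpha>. \<Sum>f\<in>UNIV. lin (\<lambda>i. \<alpha> f i * Delta P hist f i) w) ` PiE UNIV Af)"
        by (rule sum_Min) (use Af in auto)
      have finP: "finite (PiE UNIV Af)" "PiE UNIV Af \<noteq> {}" using Af
        by (auto simp: finite_PiE PiE_eq_empty_iff)
      have lB: "\<And>\<alpha>. lin (\<lambda>i. E + (\<Sum>f\<in>UNIV. \<alpha> f i * Delta P hist f i)) w
            = E + (\<Sum>f\<in>UNIV. lin (\<lambda>i. \<alpha> f i * Delta P hist f i) w)"
      proof -
        fix \<alpha> :: "'v \<Rightarrow> 'c \<Rightarrow> real"
        have "lin (\<lambda>i. E + (\<Sum>f\<in>UNIV. \<alpha> f i * Delta P hist f i)) w
            = E * (\<Sum>i\<in>UNIV. w i) + (\<Sum>i\<in>UNIV. \<Sum>f\<in>UNIV. \<alpha> f i * Delta P hist f i * w i)"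
          unfolding lin_def by (rule l1)
        also have "\<dots> = E + (\<Sum>f\<in>UNIV. lin (\<lambda>i. \<alpha> f i * Delta P hist f i) w)"
          unfolding lin_def by (rule l2[OF ws])
        finally show "lin (\<lambda>i. E + (\<Sum>f\<in>UNIV. \<alpha> f i * Delta P hist f i)) w
            = E + (\<Sum>f\<in>UNIV. lin (\<lambda>i. \<alpha> f i * Delta P hist f i) w)" .
      qed
      have b: "E + (\<Sum>f\<in>UNIV. (let d = (\<Sum>i\<in>UNIV. Delta P hist f i * w i) in
           if d = 0 then 0
           else d * Jrem P Q e n (hist @ [f]) (\<lambda>i. Delta P hist f i * w i / d)))
          = Min ((\<lambda>\<alpha>. lin \<alpha> w) ` B)"
        unfolding t s add_Min[OF finP] B_def image_image lB ..
      have "Jrem P Q e (Suc n) hist w = min (Min ((\<lambda>\<alpha>. lin \<alpha> w) ` QS)) (Min ((\<lambda>\<alpha>. lin \<alpha> w) ` B))"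
        by (simp only: Jrem.simps g b[unfolded E_def])
      also have "\<dots> = Min ((\<lambda>\<alpha>. lin \<alpha> w) ` (QS \<union> B))"
        using finB neB finQ by (simp add: image_Un Min_Un)
      finally show "Jrem P Q e (Suc n) hist w = Min ((\<lambda>\<alpha>. lin \<alpha> w) ` (QS \<union> B))" .
    qed
  qed
qed

theorem theorem2:
  fixes P :: "('c::finite \<times> 'v::finite list) pmf"
    and Q :: "'c \<Rightarrow> 'c \<Rightarrow> real" and e :: "nat \<Rightarrow> real" and K :: nat
  assumes "\<And>c fs. (c, fs) \<in> set_pmf P \<Longrightarrow> length fs = K"
    and "\<And>k. 1 \<le> k \<Longrightarrow> k \<le> K \<Longrightarrow> e k > 0"
    and "\<And>i j. Q i j \<ge> 0"
  shows "\<forall>hist :: 'v list. length hist \<le> K \<longrightarrow>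
           (\<exists>A :: ('c \<Rightarrow> real) set. finite A \<and> A \<noteq> {} \<and>
              (length hist = K \<longrightarrow> A = (\<lambda>j i. Q i j) ` UNIV) \<and>
              (\<forall>w\<in>prob_simplex. Jbar P Q e K hist w = Min ((\<lambda>\<alpha>. \<Sum>i\<in>UNIV. \<alpha> i * w i) ` A)))"
proof (intro allI impI)
  fix hist :: "'v list"
  assume le: "length hist \<le> K"
  from main[where n="K - length hist" and P=P and Q=Q and e=e, THEN spec[of _ hist]]
  obtain A :: "('c \<Rightarrow> real) set" where
    A0: "finite A \<and> A \<noteq> {} \<and> (K - length hist = 0 \<longrightarrow> A = (\<lambda>j i. Q i j) ` UNIV) \<and>
       (\<forall>w\<in>prob_simplex. Jrem P Q e (K - length hist) hist w = Min ((\<lambda>\<alpha>. lin \<alpha> w) ` A))"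
    by (elim exE)
  note A = A0[THEN conjunct1] A0[THEN conjunct2, THEN conjunct1]
    A0[THEN conjunct2, THEN conjunct2, THEN conjunct1] A0[THEN conjunct2, THEN conjunct2, THEN conjunct2]
  show "\<exists>A :: ('c \<Rightarrow> real) set. finite A \<and> A \<noteq> {} \<and>
              (length hist = K \<longrightarrow> A = (\<lambda>j i. Q i j) ` UNIV) \<and>
              (\<forall>w\<in>prob_simplex. Jbar P Q e K hist w = Min ((\<lambda>\<alpha>. \<Sum>i\<in>UNIV. \<alpha> i * w i) ` A))"
  proof (intro exI[of _ A] conjI ballI)
    show "finite A" "A \<noteq> {}" using A(1,2) .
    show "length hist = K \<longrightarrow> A = (\<lambda>j i. Q i j) ` UNIV" using A(3) le by simp
    fix w :: "'c \<Rightarrow> real" assume "w \<in> prob_simplex"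
    then show "Jbar P Q e K hist w = Min ((\<lambda>\<alpha>. \<Sum>i\<in>UNIV. \<alpha> i * w i) ` A)"
      using A(4) unfolding Jbar_def lin_def by blast
  qed
qed

end
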